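(* Let $J\subseteq\mathbb{R}$ be an open interval and let $\gamma:J\to{\rm AdS}$ be a null curve satisfying the standing assumptions below, with bending $\kappa$ and spinor frame field $(F_+,F_-)$. Then the first column vectors $\eta_+$ of $F_+$ and $\eta_-$ of $F_-$ are star-shaped curves $J\to\dot{\mathbb{R}}^2$, parametrized by central affine arc length, with canonical central affine frame fields $F_+$ and $F_-$ and central affine curvatures $$\mathrm{k}_+=\kappa+1,\qquad \mathrm{k}_-=\kappa-1;$$ in particular $(\eta_+,\eta_-)$ is a pair of cousins. Conversely, let $(\eta_+,\eta_-)$ be a pair of cousins $J\to\dot{\mathbb{R}}^2$ with central affine curvatures $\mathrm{k}_\pm$ and canonical central affine frame fields $F_\pm=(\eta_\pm,\eta_\pm')$. Then $\gamma=F_+F_-^{-1}:J\to{\rm AdS}$ is a null curve, parametrized by proper time and without inflection points, with bending $\kappa=(\mathrm{k}_++\mathrm{k}_-)/2$ and with $(F_+,F_-)$ a spinor frame field along it.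
   Context: Let $\mathbb{R}^{2,2}$ be the space of real $2\times2$ matrices with the quadratic form $q(X)=-\det X$ and its polarization $\langle\cdot,\cdot\rangle$ (signature $(2,2)$). The anti-de Sitter 3-space ${\rm AdS}$ is ${\rm SL}(2,\mathbb{R})\subset\mathbb{R}^{2,2}$ with the induced Lorentzian metric. A smooth immersed curve $\gamma:J\to{\rm AdS}$ is null if $\langle\gamma',\gamma'\rangle=0$. Standing assumptions on null curves: $\gamma$ is future-directed (i.e. $\det\begin{pmatrix}\langle U,\gamma\rangle&\langle U,\gamma'\rangle\\ \langle V,\gamma\rangle&\langle V,\gamma'\rangle\end{pmatrix}>0$ with $U=I_2$, $V=\begin{pmatrix}0&1\\-1&0\end{pmatrix}$), has no inflection points ($\gamma'\wedge\gamma''\neq0$), and is parametrized by proper time, i.e. $\langle\gamma'',\gamma''\rangle=4$. The bending is $\kappa=-\frac1{16}\langle\gamma''',\gamma'''\rangle$. Put $T=\gamma'/\sqrt2$, $N=\gamma''/2$, $B=\frac{1}{\sqrt2}\kappa\gamma'-\frac{1}{2\sqrt2}\gamma'''$ and let $P_1=\begin{pmatrix}1&0\\0&1\end{pmatrix}$, $P_2=\begin{pmatrix}0&\sqrt2\\0&0\end{pmatrix}$, $P_3=\begin{pmatrix}-1&0\\0&1\end{pmatrix}$, $P_4=\begin{pmatrix}0&0\\\sqrt2&0\end{pmatrix}$. It is further assumed (normalization on orientation) that there is a smooth map $(F_+,F_-):J\to{\rm SL}(2,\mathbb{R})\times{\rm SL}(2,\mathbb{R})$ with $\gamma=F_+F_-^{-1}$,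 $T=F_+P_2F_-^{-1}$, $N=F_+P_3F_-^{-1}$, $B=F_+P_4F_-^{-1}$; this is called a spinor frame field along $\gamma$ (unique up to overall sign). Star-shaped curves: $\dot{\mathbb{R}}^2=\mathbb{R}^2\setminus\{0\}$. A smooth curve $\eta:J\to\dot{\mathbb{R}}^2$ is star-shaped if $\det(\eta,\eta')\neq0$; it is parametrized by central affine arc length if $\det(\eta,\eta')=1$; its central affine curvature is $\mathrm{k}=-\det(\eta',\eta'')$ and its canonical central affine frame field is the ${\rm SL}(2,\mathbb{R})$-valued map $F=(\eta,\eta')$ (columns $\eta,\eta'$). A pair of star-shaped curves $(\eta,\bar\eta)$ parametrized by central affine arc length is a pair of cousins if their curvatures satisfy $(\mathrm{k}-\bar{\mathrm{k}})/2=1$. *)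

theory Defs
  imports "HOL-Analysis.Analysis"
begin

type_synonym mat2 = "real^2^2"
type_synonym vec2 = "real^2"

definition mk2 :: "real \<Rightarrow> real \<Rightarrow> real \<Rightarrow> real \<Rightarrow> mat2" where
  "mk2 a b c d = (\<chi> i j. if i = 1 then (if j = 1 then a else b) else (if j = 1 then c else d))"

definition cols2 :: "vec2 \<Rightarrow> vec2 \<Rightarrow> mat2" where
  "cols2 u v = (\<chi> i j. if j = 1 then u $ i else v $ i)"

definition qf :: "mat2 \<Rightarrow> real" where
  "qf X = - det X"

definition ip :: "mat2 \<Rightarrow> mat2 \<Rightarrow> real" where
  "ip X Y = (qf (X + Y) - qf X - qf Y) / 2"

definition AdS :: "mat2 set" where
  "AdS = {X. det X = 1}"

fun nderiv :: "nat \<Rightarrow> (real \<Rightarrow> 'a::real_normed_vector) \<Rightarrow> real \<Rightarrow> 'a" where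
  "nderiv 0 f = f"
| "nderiv (Suc n) f = (\<lambda>t. vector_derivative (nderiv n f) (at t))"

definition smooth_on :: "real set \<Rightarrow> (real \<Rightarrow> 'a::real_normed_vector) \<Rightarrow> bool" where
  "smooth_on J f \<longleftrightarrow> (\<forall>n. \<forall>t\<in>J. (nderiv n f has_vector_derivative nderiv (Suc n) f t) (at t))"

definition open_interval :: "real set \<Rightarrow> bool" where
  "open_interval J \<longleftrightarrow> open J \<and> is_interval J \<and> J \<noteq> {}"

definition Umat :: mat2 where "Umat = mk2 1 0 0 1"
definition Vmat :: mat2 where "Vmat = mk2 0 1 (-1) 0"
definition P1 :: mat2 where "P1 = mk2 1 0 0 1"
definition P2 :: mat2 where "P2 = mk2 0 (sqrt 2) 0 0"
definition P3 :: mat2 where "P3 = mk2 (-1) 0 0 1"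
definition P4 :: mat2 where "P4 = mk2 0 0 (sqrt 2) 0"

definition future_directed :: "real set \<Rightarrow> (real \<Rightarrow> mat2) \<Rightarrow> bool" where
  "future_directed J \<gamma> \<longleftrightarrow> (\<forall>t\<in>J.
     ip Umat (\<gamma> t) * ip Vmat (nderiv 1 \<gamma> t) - ip Umat (nderiv 1 \<gamma> t) * ip Vmat (\<gamma> t) > 0)"

definition no_inflection :: "real set \<Rightarrow> (real \<Rightarrow> mat2) \<Rightarrow> bool" where
  "no_inflection J \<gamma> \<longleftrightarrow> (\<forall>t\<in>J. \<forall>a b::real.
     a *\<^sub>R nderiv 1 \<gamma> t + b *\<^sub>R nderiv 2 \<gamma> t = 0 \<longrightarrow> a = 0 \<and> b = 0)"

definition null_curve :: "real set \<Rightarrow> (real \<Rightarrow> mat2) \<Rightarrow> bool" where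
  "null_curve J \<gamma> \<longleftrightarrow> smooth_on J \<gamma> \<and> (\<forall>t\<in>J. \<gamma> t \<in> AdS)
     \<and> (\<forall>t\<in>J. ip (nderiv 1 \<gamma> t) (nderiv 1 \<gamma> t) = 0)"

definition proper_time :: "real set \<Rightarrow> (real \<Rightarrow> mat2) \<Rightarrow> bool" where
  "proper_time J \<gamma> \<longleftrightarrow> (\<forall>t\<in>J. ip (nderiv 2 \<gamma> t) (nderiv 2 \<gamma> t) = 4)"

definition bending :: "(real \<Rightarrow> mat2) \<Rightarrow> real \<Rightarrow> real" where
  "bending \<gamma> t = - (1/16) * ip (nderiv 3 \<gamma> t) (nderiv 3 \<gamma> t)"

definition Tfr :: "(real \<Rightarrow> mat2) \<Rightarrow> real \<Rightarrow> mat2" where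
  "Tfr \<gamma> t = (1 / sqrt 2) *\<^sub>R nderiv 1 \<gamma> t"
definition Nfr :: "(real \<Rightarrow> mat2) \<Rightarrow> real \<Rightarrow> mat2" where
  "Nfr \<gamma> t = (1 / 2) *\<^sub>R nderiv 2 \<gamma> t"
definition Bfr :: "(real \<Rightarrow> mat2) \<Rightarrow> real \<Rightarrow> mat2" where
  "Bfr \<gamma> t = (bending \<gamma> t / sqrt 2) *\<^sub>R nderiv 1 \<gamma> t - (1 / (2 * sqrt 2)) *\<^sub>R nderiv 3 \<gamma> t"

definition spinor_frame :: "real set \<Rightarrow> (real \<Rightarrow> mat2) \<Rightarrow> (real \<Rightarrow> mat2) \<Rightarrow> (real \<Rightarrow> mat2) \<Rightarrow> bool" where
  "spinor_frame J \<gamma> Fp Fm \<longleftrightarrow> smooth_on J Fp \<and> smooth_on J Fm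
     \<and> (\<forall>t\<in>J. det (Fp t) = 1 \<and> det (Fm t) = 1
          \<and> \<gamma> t = Fp t ** matrix_inv (Fm t)
          \<and> Tfr \<gamma> t = Fp t ** P2 ** matrix_inv (Fm t)
          \<and> Nfr \<gamma> t = Fp t ** P3 ** matrix_inv (Fm t)
          \<and> Bfr \<gamma> t = Fp t ** P4 ** matrix_inv (Fm t))"

definition star_shaped :: "real set \<Rightarrow> (real \<Rightarrow> vec2) \<Rightarrow> bool" where
  "star_shaped J \<eta> \<longleftrightarrow> smooth_on J \<eta> \<and> (\<forall>t\<in>J. \<eta> t \<noteq> 0 \<and> det (cols2 (\<eta> t) (nderiv 1 \<eta> t)) \<noteq> 0)"

definition ca_arclength :: "real set \<Rightarrow> (real \<Rightarrow> vec2) \<Rightarrow> bool" where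
  "ca_arclength J \<eta> \<longleftrightarrow> (\<forall>t\<in>J. det (cols2 (\<eta> t) (nderiv 1 \<eta> t)) = 1)"

definition ca_curvature :: "(real \<Rightarrow> vec2) \<Rightarrow> real \<Rightarrow> real" where
  "ca_curvature \<eta> t = - det (cols2 (nderiv 1 \<eta> t) (nderiv 2 \<eta> t))"

definition ca_frame :: "(real \<Rightarrow> vec2) \<Rightarrow> real \<Rightarrow> mat2" where
  "ca_frame \<eta> t = cols2 (\<eta> t) (nderiv 1 \<eta> t)"

definition cousins :: "real set \<Rightarrow> (real \<Rightarrow> vec2) \<Rightarrow> (real \<Rightarrow> vec2) \<Rightarrow> bool" where
  "cousins J \<eta> \<eta>' \<longleftrightarrow> star_shaped J \<eta> \<and> star_shaped J \<eta>' \<and> ca_arclength J \<eta> \<and> ca_arclength J \<eta>'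
     \<and> (\<forall>t\<in>J. (ca_curvature \<eta> t - ca_curvature \<eta>' t) / 2 = 1)"

end

theory Submission
  imports Defs
begin


lemma nderiv_Suc_shift: "nderiv (Suc n) f = nderiv n (nderiv 1 f)"
  by (induction n) auto

lemma vd_cong_open:
  assumes "open J" "t \<in> J" "\<forall>s\<in>J. f s = g s"
  shows "vector_derivative f (at t) = vector_derivative g (at t)"
proof -
  have "\<And>D. (f has_vector_derivative D) (at t) \<longleftrightarrow> (g has_vector_derivative D) (at t)"
    using assms has_vector_derivative_transform_within_open by metis
  then show ?thesis unfolding vector_derivative_def by simp
qed

lemma nderiv_cong_open:
  assumes "open J" "\<forall>s\<in>J. f s = g s"
  shows "t \<in> J \<Longrightarrow> nderiv n f t = nderiv n g t"
proof (induction n arbitrary: t)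
  case 0 then show ?case using assms by simp
next
  case (Suc n) then show ?case using vd_cong_open[OF assms(1) Suc.prems, of "nderiv n f" "nderiv n g"] by simp
qed

lemma nderiv_seq:
  assumes "open J" "\<forall>t\<in>J. D 0 t = f t"
    "\<And>n t. t\<in>J \<Longrightarrow> (D n has_vector_derivative D (Suc n) t) (at t)"
  shows "t\<in>J \<Longrightarrow> nderiv n f t = D n t"
proof (induction n arbitrary: t)
  case 0 then show ?case using assms by simp
next
  case (Suc n)
  have "(nderiv n f has_vector_derivative D (Suc n) t) (at t)"
    by (rule has_vector_derivative_transform_within_open[OF assms(3)[OF Suc.prems] assms(1) Suc.prems])
       (simp add: Suc.IH)
  then show ?case by (simp add: vector_derivative_at)
qed

lemma smooth_seq:
  assumes "open J" "\<forall>t\<in>J. D 0 t = f t"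
    "\<And>n t. t\<in>J \<Longrightarrow> (D n has_vector_derivative D (Suc n) t) (at t)"
  shows "smooth_on J f"
  unfolding smooth_on_def
proof (intro allI ballI)
  fix n t assume t: "t \<in> J"
  have "(nderiv n f has_vector_derivative D (Suc n) t) (at t)"
    by (rule has_vector_derivative_transform_within_open[OF assms(3)[OF t] assms(1) t])
       (simp add: nderiv_seq[OF assms])
  then show "(nderiv n f has_vector_derivative nderiv (Suc n) f t) (at t)"
    using nderiv_seq[OF assms t, of "Suc n"] by simp
qed

lemma smooth_der: "smooth_on J f \<Longrightarrow> t \<in> J \<Longrightarrow> (nderiv n f has_vector_derivative nderiv (Suc n) f t) (at t)"
  unfolding smooth_on_def by blast

lemma smooth_der0: "smooth_on J f \<Longrightarrow> t \<in> J \<Longrightarrow> (f has_vector_derivative nderiv 1 f t) (at t)"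
  using smooth_der[of J f t 0] by simp

lemma smooth_nderiv1: "smooth_on J f \<Longrightarrow> smooth_on J (nderiv 1 f)"
  unfolding smooth_on_def by (metis nderiv_Suc_shift)

lemma smooth_cong:
  assumes "open J" "\<forall>t\<in>J. f t = g t" "smooth_on J f"
  shows "smooth_on J g"
  by (rule smooth_seq[of J "\<lambda>n. nderiv n f"]) (use assms smooth_der in auto)

lemma smooth_lin2:
  assumes "open J" "bounded_linear L1" "bounded_linear L2" "smooth_on J f" "smooth_on J g"
  shows "smooth_on J (\<lambda>t. L1 (f t) + L2 (g t))"
    and "t \<in> J \<Longrightarrow> nderiv n (\<lambda>t. L1 (f t) + L2 (g t)) t = L1 (nderiv n f t) + L2 (nderiv n g t)"
proof -
  let ?D = "\<lambda>n t. L1 (nderiv n f t) + L2 (nderiv n g t)"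
  have d: "(?D n has_vector_derivative ?D (Suc n) t) (at t)" if "t \<in> J" for n t
    by (intro has_vector_derivative_add bounded_linear.has_vector_derivative[OF assms(2)]
        bounded_linear.has_vector_derivative[OF assms(3)] smooth_der[OF assms(4) that] smooth_der[OF assms(5) that])
  show "smooth_on J (\<lambda>t. L1 (f t) + L2 (g t))" by (rule smooth_seq[of J ?D]) (use assms d in auto)
  show "t \<in> J \<Longrightarrow> nderiv n (\<lambda>t. L1 (f t) + L2 (g t)) t = L1 (nderiv n f t) + L2 (nderiv n g t)"
    by (rule nderiv_seq[of J ?D]) (use assms d in auto)
qed

lemma smooth_lin:
  assumes "open J" "bounded_linear L" "smooth_on J f"
  shows "smooth_on J (\<lambda>t. L (f t))"
    and "t \<in> J \<Longrightarrow> nderiv n (\<lambda>t. L (f t)) t = L (nderiv n f t)"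
  using smooth_lin2[OF assms(1,2) bounded_linear_zero assms(3,3)] by simp_all

lemma smooth_add:
  assumes "open J" "smooth_on J f" "smooth_on J g"
  shows "smooth_on J (\<lambda>t. f t + g t)"
  using smooth_lin2[OF assms(1) bounded_linear_ident bounded_linear_ident assms(2,3)] by simp

lemma smooth_const: "smooth_on J (\<lambda>t. c)"
proof -
  have e: "nderiv n (\<lambda>t. c) = (\<lambda>t. if n = 0 then c else 0)" for n
    by (induction n) (auto simp: vector_derivative_at)
  show ?thesis unfolding smooth_on_def e by simp
qed

inductive SP :: "real set \<Rightarrow> ('a::real_normed_vector \<Rightarrow> 'b::real_normed_vector \<Rightarrow> 'c::real_normed_vector) \<Rightarrow> (real \<Rightarrow> 'c) \<Rightarrow> bool"
  for J B where
  prod: "smooth_on J u \<Longrightarrow> smooth_on J v \<Longrightarrow> SP J B (\<lambda>t. B (u t) (v t))"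
| add: "SP J B h1 \<Longrightarrow> SP J B h2 \<Longrightarrow> SP J B (\<lambda>t. h1 t + h2 t)"
| cong: "SP J B h \<Longrightarrow> (\<forall>t\<in>J. h t = g t) \<Longrightarrow> SP J B g"

lemma SP_step:
  assumes "SP J B h" "bounded_bilinear B" "open J"
  shows "\<exists>h'. (\<forall>t\<in>J. (h has_vector_derivative h' t) (at t)) \<and> SP J B h'"
  using assms(1)
proof induction
  case (prod u v)
  let ?h = "\<lambda>t. B (u t) (nderiv 1 v t) + B (nderiv 1 u t) (v t)"
  have "SP J B ?h"
    by (intro SP.add SP.prod prod smooth_nderiv1)
  moreover have "\<forall>t\<in>J. ((\<lambda>t. B (u t) (v t)) has_vector_derivative ?h t) (at t)"
  proof
    fix t assume t: "t \<in> J"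
    show "((\<lambda>t. B (u t) (v t)) has_vector_derivative ?h t) (at t)"
      using bounded_bilinear.has_vector_derivative[OF assms(2) smooth_der0[OF prod(1) t] smooth_der0[OF prod(2) t]] .
  qed
  ultimately show ?case by (intro exI[of _ ?h] conjI) auto
next
  case (add h1 h2)
  then obtain k1 k2 where "\<forall>t\<in>J. (h1 has_vector_derivative k1 t) (at t)" "SP J B k1"
    "\<forall>t\<in>J. (h2 has_vector_derivative k2 t) (at t)" "SP J B k2" by blast
  then show ?case by (intro exI[of _ "\<lambda>t. k1 t + k2 t"]) (auto intro: has_vector_derivative_add SP.add)
next
  case (cong h g)
  then obtain k where "\<forall>t\<in>J. (h has_vector_derivative k t) (at t)" "SP J B k" by blast
  then show ?case using cong.hyps(2) assms(3)
    by (intro exI[of _ k]) (auto intro: has_vector_derivative_transform_within_open)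
qed

lemma smooth_coind:
  assumes "open J" "P f" "\<And>h. P h \<Longrightarrow> \<exists>h'. (\<forall>t\<in>J. (h has_vector_derivative h' t) (at t)) \<and> P h'"
  shows "smooth_on J f"
proof -
  obtain nx where nx: "\<And>h. P h \<Longrightarrow> (\<forall>t\<in>J. (h has_vector_derivative nx h t) (at t)) \<and> P (nx h)"
    using assms(3) by metis
  define D where "D n = (nx ^^ n) f" for n
  have PD: "P (D n)" for n by (induction n) (auto simp: D_def assms(2) nx)
  show ?thesis
    by (rule smooth_seq[of J D]) (use assms(1) PD nx in \<open>auto simp: D_def\<close>)
qed

lemma smooth_bilinear:
  assumes "open J" "bounded_bilinear B" "smooth_on J f" "smooth_on J g"
  shows "smooth_on J (\<lambda>t. B (f t) (g t))"
  by (rule smooth_coind[where P="SP J B"]) (use assms SP_step SP.prod in auto)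




lemma sc_deriv:
  assumes "(a has_real_derivative a') (at t)"
  shows "((\<lambda>s. a s *\<^sub>R E) has_vector_derivative a' *\<^sub>R E) (at t)"
  by (rule has_vector_derivative_eq_rhs[OF has_vector_derivative_scaleR[OF assms has_vector_derivative_const]]) simp


lemma mat2_eq_iff: "(X::mat2) = Y \<longleftrightarrow> X$1$1 = Y$1$1 \<and> X$1$2 = Y$1$2 \<and> X$2$1 = Y$2$1 \<and> X$2$2 = Y$2$2"
  by (auto simp: vec_eq_iff forall_2)

lemma vec2_eq_iff: "(x::vec2) = y \<longleftrightarrow> x$1 = y$1 \<and> x$2 = y$2"
  by (auto simp: vec_eq_iff forall_2)

lemma mk2_nth[simp]: "mk2 a b c d $1$1 = a" "mk2 a b c d $1$2 = b" "mk2 a b c d $2$1 = c" "mk2 a b c d $2$2 = d"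
  by (simp_all add: mk2_def)

lemma mat2_mk2: "(X::mat2) = mk2 (X$1$1) (X$1$2) (X$2$1) (X$2$2)"
  by (simp add: mat2_eq_iff)

lemma mult_mk2: "mk2 a b c d ** mk2 e f g h = mk2 (a*e+b*g) (a*f+b*h) (c*e+d*g) (c*f+d*h)"
  by (simp add: mat2_eq_iff matrix_matrix_mult_def sum_2)

lemma det_mk2: "det (mk2 a b c d) = a*d - b*c"
  by (simp add: det_2)

lemma mat1_mk2: "(mat 1 :: mat2) = mk2 1 0 0 1"
  by (simp add: mat2_eq_iff mat_def)

lemma scaleR_mk2: "r *\<^sub>R mk2 a b c d = mk2 (r*a) (r*b) (r*c) (r*d)"
  by (simp add: mat2_eq_iff)

lemma add_mk2: "mk2 a b c d + mk2 e f g h = mk2 (a+e) (b+f) (c+g) (d+h)"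
  by (simp add: mat2_eq_iff)

lemma diff_mk2: "mk2 a b c d - mk2 e f g h = mk2 (a-e) (b-f) (c-g) (d-h)"
  by (simp add: mat2_eq_iff)

lemma zero_mk2: "(0::mat2) = mk2 0 0 0 0"
  by (simp add: mat2_eq_iff)

lemma mk2_eq: "mk2 a b c d = mk2 e f g h \<longleftrightarrow> a = e \<and> b = f \<and> c = g \<and> d = h"
  by (simp add: mat2_eq_iff)

lemma matrix_inv_eq:
  fixes A X :: mat2
  assumes "A ** X = mat 1" "X ** A = mat 1"
  shows "matrix_inv A = X"
proof -
  have "\<exists>Y. A ** Y = mat 1 \<and> Y ** A = mat 1" using assms by blast
  then have Y: "A ** matrix_inv A = mat 1" "matrix_inv A ** A = mat 1"
    unfolding matrix_inv_def by (metis (mono_tags, lifting) someI_ex)+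
  have "matrix_inv A = matrix_inv A ** (A ** X)" using assms by simp
  also have "\<dots> = X" by (simp add: matrix_mul_assoc Y)
  finally show ?thesis .
qed

lemma inv_mk2: "a*d - b*c = 1 \<Longrightarrow> matrix_inv (mk2 a b c d) = mk2 d (-b) (-c) a"
  by (rule matrix_inv_eq) (simp_all add: mult_mk2 mat1_mk2 mk2_eq algebra_simps)

lemma inv_mat2: "det (X::mat2) = 1 \<Longrightarrow> matrix_inv X = mk2 (X$2$2) (-X$1$2) (-X$2$1) (X$1$1)"
  by (metis det_mk2 inv_mk2 mat2_mk2)

lemma ip_mk2: "ip (mk2 a b c d) (mk2 e f g h) = -(a*h + e*d - b*g - f*c)/2"
  by (simp add: ip_def qf_def add_mk2 det_mk2 algebra_simps)

lemma cols2_mk2: "cols2 u v = mk2 (u$1) (v$1) (u$2) (v$2)"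
  by (simp add: mat2_eq_iff cols2_def)

lemma column_nth[simp]: "column j (X::mat2) $ i = X $ i $ j"
  unfolding column_def by (rule vec_lambda_beta)


lemma mk2_deriv:
  assumes "(a has_real_derivative a') (at t)" "(b has_real_derivative b') (at t)"
    "(c has_real_derivative c') (at t)" "(d has_real_derivative d') (at t)"
  shows "((\<lambda>s. mk2 (a s) (b s) (c s) (d s)) has_vector_derivative mk2 a' b' c' d') (at t)"
proof -
  have e: "(\<lambda>s. mk2 (a s) (b s) (c s) (d s)) = (\<lambda>s. a s *\<^sub>R mk2 1 0 0 0 + b s *\<^sub>R mk2 0 1 0 0 + c s *\<^sub>R mk2 0 0 1 0 + d s *\<^sub>R mk2 0 0 0 1)"
    by (rule ext) (simp only: scaleR_mk2 add_mk2 mult_1_right mult_zero_right add_0_right add_0_left)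
  have e2: "mk2 a' b' c' d' = a' *\<^sub>R mk2 1 0 0 0 + b' *\<^sub>R mk2 0 1 0 0 + c' *\<^sub>R mk2 0 0 1 0 + d' *\<^sub>R mk2 0 0 0 1"
    by (simp only: scaleR_mk2 add_mk2 mult_1_right mult_zero_right add_0_right add_0_left)
  have "((\<lambda>s. a s *\<^sub>R mk2 1 0 0 0 + b s *\<^sub>R mk2 0 1 0 0 + c s *\<^sub>R mk2 0 0 1 0 + d s *\<^sub>R mk2 0 0 0 1) has_vector_derivative
     a' *\<^sub>R mk2 1 0 0 0 + b' *\<^sub>R mk2 0 1 0 0 + c' *\<^sub>R mk2 0 0 1 0 + d' *\<^sub>R mk2 0 0 0 1) (at t)"
    using has_vector_derivative_add[OF has_vector_derivative_add[OF has_vector_derivative_add[OF sc_deriv[OF assms(1)] sc_deriv[OF assms(2)]] sc_deriv[OF assms(3)]] sc_deriv[OF assms(4)]] .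
  then show ?thesis unfolding e e2[symmetric] .
qed

lemma entry_deriv:
  assumes "(F has_vector_derivative F') (at t)"
  shows "((\<lambda>s. F s $ i $ j) has_real_derivative F' $ i $ j) (at t)"
proof -
  have h1: "((\<lambda>s. F s $ i) has_vector_derivative F' $ i) (at t)"
    by (rule bounded_linear.has_vector_derivative[OF bounded_linear_vec_nth assms])
  have h2: "((\<lambda>s. F s $ i $ j) has_vector_derivative F' $ i $ j) (at t)"
    by (rule bounded_linear.has_vector_derivative[OF bounded_linear_vec_nth h1])
  then show ?thesis by (simp only: has_real_derivative_iff_has_vector_derivative)
qed

lemma vec_entry_deriv:
  assumes "(F has_vector_derivative F') (at t)"
  shows "((\<lambda>s. F s $ i) has_real_derivative F' $ i) (at t)"
proof -
  have h1: "((\<lambda>s. F s $ i) has_vector_derivative F' $ i) (at t)"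
    by (rule bounded_linear.has_vector_derivative[OF bounded_linear_vec_nth assms])
  then show ?thesis by (simp only: has_real_derivative_iff_has_vector_derivative)
qed

lemma nderiv_next:
  assumes "open J" "\<forall>s\<in>J. nderiv n f s = G s" "t \<in> J" "(G has_vector_derivative X) (at t)"
  shows "nderiv (Suc n) f t = X"
proof -
  have "(nderiv n f has_vector_derivative X) (at t)"
    by (rule has_vector_derivative_transform_within_open[OF assms(4,1,3)]) (use assms(2) in auto)
  then show ?thesis by (simp add: vector_derivative_at)
qed

lemma const_deriv_zero:
  assumes "open J" "t \<in> J" "\<forall>s\<in>J. f s = c" "(f has_real_derivative D) (at t)"
  shows "D = 0"
proof -
  have "((\<lambda>s. c) has_real_derivative 0) (at t)" by simp
  then have "(f has_real_derivative 0) (at t)"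
    by (rule has_field_derivative_transform_within_open[OF _ assms(1,2)]) (use assms(3) in auto)
  then show ?thesis using assms(4) DERIV_unique by blast
qed

lemma bl_column1: "bounded_linear (\<lambda>X::mat2. column 1 X)"
  by (rule linear_conv_bounded_linear[THEN iffD1]) (auto intro!: linearI simp: vec_eq_iff column_def)

lemma bl_cols2a: "bounded_linear (\<lambda>u. cols2 u 0)"
  by (rule linear_conv_bounded_linear[THEN iffD1]) (auto intro!: linearI simp: vec_eq_iff cols2_def)

lemma bl_cols2b: "bounded_linear (\<lambda>v. cols2 0 v)"
  by (rule linear_conv_bounded_linear[THEN iffD1]) (auto intro!: linearI simp: vec_eq_iff cols2_def)

lemma cols2_split: "cols2 u v = cols2 u 0 + cols2 0 v"
  by (simp add: vec_eq_iff cols2_def)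

lemma bl_adj: "bounded_linear (\<lambda>X::mat2. mk2 (X$2$2) (-X$1$2) (-X$2$1) (X$1$1))"
  by (rule linear_conv_bounded_linear[THEN iffD1]) (auto intro!: linearI simp: mat2_eq_iff)

lemma bb_mult: "bounded_bilinear (\<lambda>X Y::mat2. X ** Y)"
proof -
  have "bilinear (\<lambda>X Y::mat2. X ** Y)"
    unfolding bilinear_def
    by (auto intro!: linearI simp: vec_eq_iff matrix_matrix_mult_def sum_2 algebra_simps)
  then show ?thesis by (rule bilinear_conv_bounded_bilinear[THEN iffD1])
qed



lemma nd_num: "nderiv (Suc 0) f = nderiv 1 f" "nderiv (Suc 1) f = nderiv 2 f" "nderiv (Suc 2) f = nderiv 3 f"
  by (simp_all add: numeral_2_eq_2 numeral_3_eq_3)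

lemma smooth_der1: "smooth_on J f \<Longrightarrow> t \<in> J \<Longrightarrow> (nderiv 1 f has_vector_derivative nderiv 2 f t) (at t)"
  using smooth_der[of J f t 1] unfolding nd_num by blast

lemma dpoly:
  assumes "(a has_real_derivative a') (at t)" "(b has_real_derivative b') (at t)"
    "(c has_real_derivative c') (at t)" "(d has_real_derivative d') (at t)"
    "x = \<alpha>*(a'*b t + a t*b') + \<beta>*(c'*d t + c t*d')"
  shows "((\<lambda>s. \<alpha>*(a s*b s) + \<beta>*(c s*d s)) has_real_derivative x) (at t)"
proof -
  have "((\<lambda>s. \<alpha>*(a s*b s) + \<beta>*(c s*d s)) has_real_derivative \<alpha>*(a'*b t + b'*a t) + \<beta>*(c'*d t + d'*c t)) (at t)"
    using DERIV_add[OF DERIV_cmult[OF DERIV_mult[OF assms(1,2)]] DERIV_cmult[OF DERIV_mult[OF assms(3,4)]]] .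
  then show ?thesis using assms(5) by (simp add: mult.commute)
qed

lemma ca_second:
  assumes J: "open J" and sm: "smooth_on J \<eta>" and al: "ca_arclength J \<eta>" and t: "t \<in> J"
  shows "nderiv 2 \<eta> t = ca_curvature \<eta> t *\<^sub>R \<eta> t"
proof -
  define q where "q = nderiv 1 \<eta>"
  define r where "r = nderiv 2 \<eta>"
  have d0: "(\<eta> has_vector_derivative q t) (at t)" unfolding q_def by (rule smooth_der0[OF sm t])
  have d1: "(q has_vector_derivative r t) (at t)" unfolding q_def r_def by (rule smooth_der1[OF sm t])
  have dt: "\<forall>s\<in>J. 1*(\<eta> s$1 * q s$2) + (-1)*(q s$1 * \<eta> s$2) = 1"
    using al unfolding ca_arclength_def q_def by (simp add: cols2_mk2 det_mk2)
  have "((\<lambda>s. 1*(\<eta> s$1 * q s$2) + (-1)*(q s$1 * \<eta> s$2)) has_real_derivative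
         1*(q t$1 * q t$2 + \<eta> t$1 * r t$2) + (-1)*(r t$1 * \<eta> t$2 + q t$1 * q t$2)) (at t)"
    by (rule dpoly[OF vec_entry_deriv[OF d0] vec_entry_deriv[OF d1] vec_entry_deriv[OF d1] vec_entry_deriv[OF d0]]) simp
  from const_deriv_zero[OF J t dt this]
  have z: "\<eta> t$1 * r t$2 - r t$1 * \<eta> t$2 = 0" by simp
  have o: "\<eta> t$1 * q t$2 - q t$1 * \<eta> t$2 = 1" using dt t by simp
  have k: "ca_curvature \<eta> t = -(q t$1 * r t$2 - r t$1 * q t$2)"
    unfolding ca_curvature_def q_def r_def by (simp add: cols2_mk2 det_mk2)
  show ?thesis
    unfolding r_def[symmetric] vec2_eq_iff k using z o by (simp; algebra)
qed



lemma sqrt2_facts: "1 / sqrt 2 = sqrt 2 * (1/2)" "x / sqrt 2 = x * sqrt 2 * (1/2)"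
  "1 / (2 * sqrt 2) = sqrt 2 * (1/4)" "sqrt 2 * sqrt 2 = (2::real)"
  by (simp_all add: field_simps)

lemma pos_helper: "(x::real) = (a+b+c+d)/2 \<Longrightarrow> 0 < a+b \<Longrightarrow> 0 \<le> c+d \<Longrightarrow> 0 < x"
  by simp

lemma smooth_caframe:
  assumes "open J" "smooth_on J p"
  shows "smooth_on J (ca_frame p)"
proof -
  have e: "ca_frame p = (\<lambda>t. cols2 (p t) 0 + cols2 0 (nderiv 1 p t))"
    by (rule ext) (simp add: ca_frame_def vec_eq_iff cols2_def)
  show ?thesis unfolding e
    by (rule smooth_lin2(1)[OF assms(1) bl_cols2a bl_cols2b assms(2) smooth_nderiv1[OF assms(2)]])
qed

lemma converse:
  assumes J: "open J" and C: "cousins J p m"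
  shows "let \<gamma> = (\<lambda>t. ca_frame p t ** matrix_inv (ca_frame m t)) in
          null_curve J \<gamma> \<and> future_directed J \<gamma> \<and> proper_time J \<gamma> \<and> no_inflection J \<gamma>
          \<and> (\<forall>t\<in>J. bending \<gamma> t = (ca_curvature p t + ca_curvature m t) / 2)
          \<and> spinor_frame J \<gamma> (ca_frame p) (ca_frame m)"
proof -
  from C have sp: "smooth_on J p" and sm: "smooth_on J m" and ap: "ca_arclength J p"
    and am: "ca_arclength J m" and kk: "\<forall>t\<in>J. (ca_curvature p t - ca_curvature m t)/2 = 1"
    unfolding cousins_def star_shaped_def by auto
  define \<gamma> where "\<gamma> = (\<lambda>t. ca_frame p t ** matrix_inv (ca_frame m t))"
  define q where "q = nderiv 1 p"
  define r where "r = nderiv 2 p"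
  define n where "n = nderiv 1 m"
  define w where "w = nderiv 2 m"
  define kp where "kp = ca_curvature p"
  define km where "km = ca_curvature m"
  have cfp: "ca_frame p t = cols2 (p t) (q t)" for t by (simp add: ca_frame_def q_def)
  have cfm: "ca_frame m t = cols2 (m t) (n t)" for t by (simp add: ca_frame_def n_def)
  have E: "((\<lambda>s. p s$i) has_real_derivative q t$i) (at t)" "((\<lambda>s. q s$i) has_real_derivative r t$i) (at t)"
     "((\<lambda>s. m s$i) has_real_derivative n t$i) (at t)" "((\<lambda>s. n s$i) has_real_derivative w t$i) (at t)"
    if "t \<in> J" for t i
    using vec_entry_deriv[OF smooth_der0[OF sp that]] vec_entry_deriv[OF smooth_der1[OF sp that]]
      vec_entry_deriv[OF smooth_der0[OF sm that]] vec_entry_deriv[OF smooth_der1[OF sm that]]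
    unfolding q_def r_def n_def w_def by blast+
  have rk: "r t$1 = kp t * p t$1" "r t$2 = kp t * p t$2" if "t \<in> J" for t
    using ca_second[OF J sp ap that] unfolding r_def kp_def by (simp_all add: vec2_eq_iff)
  have wk: "w t$1 = km t * m t$1" "w t$2 = km t * m t$2" if "t \<in> J" for t
    using ca_second[OF J sm am that] unfolding w_def km_def by (simp_all add: vec2_eq_iff)
  have detp: "p t$1 * q t$2 - q t$1 * p t$2 = 1" if "t \<in> J" for t
    using ap that unfolding ca_arclength_def q_def by (simp add: cols2_mk2 det_mk2)
  have detm: "m t$1 * n t$2 - n t$1 * m t$2 = 1" if "t \<in> J" for t
    using am that unfolding ca_arclength_def n_def by (simp add: cols2_mk2 det_mk2)
  have kd: "kp t - km t = 2" if "t \<in> J" for t using kk that unfolding kp_def km_def by simp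
  have invm: "matrix_inv (ca_frame m t) = mk2 (n t$2) (-(n t$1)) (-(m t$2)) (m t$1)" if "t \<in> J" for t
    unfolding cfm cols2_mk2 by (rule inv_mk2) (use detm[OF that] in simp)
  define G0 where "G0 = (\<lambda>t. mk2 (1*(p t$1 * n t$2) + (-1)*(q t$1 * m t$2)) ((-1)*(p t$1 * n t$1) + 1*(q t$1 * m t$1))
      (1*(p t$2 * n t$2) + (-1)*(q t$2 * m t$2)) ((-1)*(p t$2 * n t$1) + 1*(q t$2 * m t$1)))"
  define G1 where "G1 = (\<lambda>t. mk2 ((-2)*(p t$1 * m t$2) + 0*(p t$1 * m t$2)) (2*(p t$1 * m t$1) + 0*(p t$1 * m t$1))
      ((-2)*(p t$2 * m t$2) + 0*(p t$2 * m t$2)) (2*(p t$2 * m t$1) + 0*(p t$2*m t$1)))"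
  define G2 where "G2 = (\<lambda>t. mk2 ((-2)*(q t$1 * m t$2) + (-2)*(p t$1 * n t$2)) (2*(q t$1 * m t$1) + 2*(p t$1 * n t$1))
      ((-2)*(q t$2 * m t$2) + (-2)*(p t$2 * n t$2)) (2*(q t$2 * m t$1) + 2*(p t$2 * n t$1)))"
  define G3 where "G3 = (\<lambda>t. mk2 ((-2)*(r t$1 * m t$2 + q t$1 * n t$2) + (-2)*(q t$1 * n t$2 + p t$1 * w t$2))
      (2*(r t$1 * m t$1 + q t$1 * n t$1) + 2*(q t$1 * n t$1 + p t$1 * w t$1))
      ((-2)*(r t$2 * m t$2 + q t$2 * n t$2) + (-2)*(q t$2 * n t$2 + p t$2 * w t$2))
      (2*(r t$2 * m t$1 + q t$2 * n t$1) + 2*(q t$2 * n t$1 + p t$2 * w t$1)))"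
  have g0: "\<gamma> t = G0 t" if "t \<in> J" for t
    unfolding \<gamma>_def G0_def invm[OF that] cfp cols2_mk2 mult_mk2 by (simp add: mk2_eq)
  have g1: "nderiv 1 \<gamma> t = G1 t" if t: "t \<in> J" for t
  proof -
    have "(G0 has_vector_derivative G1 t) (at t)"
      unfolding G0_def G1_def
      apply (rule mk2_deriv; rule dpoly[OF E(1,4,2,3)[OF t]]) 
      using kd[OF t] by (simp_all add: rk[OF t] wk[OF t] algebra_simps eq_diff_eq[symmetric])
    then show ?thesis using nderiv_next[OF J _ t, of 0 \<gamma> G0] g0 by (simp add: nd_num)
  qed
  have g2: "nderiv 2 \<gamma> t = G2 t" if t: "t \<in> J" for t
  proof -
    have "(G1 has_vector_derivative G2 t) (at t)"
      unfolding G1_def G2_def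
      by (rule mk2_deriv; rule dpoly[OF E(1,3,1,3)[OF t]]; simp add: algebra_simps)
    moreover have "\<forall>s\<in>J. nderiv 1 \<gamma> s = G1 s" using g1 by blast
    ultimately show ?thesis using nderiv_next[OF J _ t, of 1 \<gamma> G1] unfolding nd_num by blast
  qed
  have g3: "nderiv 3 \<gamma> t = G3 t" if t: "t \<in> J" for t
  proof -
    have "(G2 has_vector_derivative G3 t) (at t)"
      unfolding G2_def G3_def
      by (rule mk2_deriv; rule dpoly[OF E(2,3,1,4)[OF t]]; simp add: algebra_simps)
    moreover have "\<forall>s\<in>J. nderiv 2 \<gamma> s = G2 s" using g2 by blast
    ultimately show ?thesis using nderiv_next[OF J _ t, of 2 \<gamma> G2] unfolding nd_num by blast
  qed
  have bend: "bending \<gamma> t = (kp t + km t) / 2" if t: "t \<in> J" for t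
    unfolding bending_def g3[OF t] G3_def ip_mk2 using rk[OF t] wk[OF t] kd[OF t] detp[OF t] detm[OF t]
    by simp algebra
  have sfp: "smooth_on J (ca_frame p)" by (rule smooth_caframe[OF J sp])
  have sfm: "smooth_on J (ca_frame m)" by (rule smooth_caframe[OF J sm])
  have dfp: "det (ca_frame p t) = 1" if "t \<in> J" for t
    using detp[OF that] unfolding cfp cols2_mk2 det_mk2 by simp
  have dfm: "det (ca_frame m t) = 1" if "t \<in> J" for t
    using detm[OF that] unfolding cfm cols2_mk2 det_mk2 by simp
  have sadj: "smooth_on J (\<lambda>t. mk2 (ca_frame m t$2$2) (-(ca_frame m t$1$2)) (-(ca_frame m t$2$1)) (ca_frame m t$1$1))"
    by (rule smooth_lin(1)[OF J bl_adj sfm])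
  have sinv: "smooth_on J (\<lambda>t. matrix_inv (ca_frame m t))"
    by (rule smooth_cong[OF J _ sadj]) (simp add: inv_mat2 dfm)
  have sg: "smooth_on J \<gamma>" unfolding \<gamma>_def by (rule smooth_bilinear[OF J bb_mult sfp sinv])
  have ads: "\<gamma> t \<in> AdS" if t: "t \<in> J" for t
    unfolding AdS_def g0[OF t] G0_def using detp[OF t] detm[OF t] by (simp add: det_mk2) algebra
  have nul: "ip (nderiv 1 \<gamma> t) (nderiv 1 \<gamma> t) = 0" if t: "t \<in> J" for t
    unfolding g1[OF t] G1_def ip_mk2 by (simp add: algebra_simps)
  have fut: "ip Umat (\<gamma> t) * ip Vmat (nderiv 1 \<gamma> t) - ip Umat (nderiv 1 \<gamma> t) * ip Vmat (\<gamma> t) > 0" if t: "t \<in> J" for t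
  proof -
    have "ip Umat (\<gamma> t) * ip Vmat (nderiv 1 \<gamma> t) - ip Umat (nderiv 1 \<gamma> t) * ip Vmat (\<gamma> t)
        = ((p t$1)^2 + (p t$2)^2 + (m t$1)^2 + (m t$2)^2) / 2"
      unfolding g0[OF t] g1[OF t] G0_def G1_def Umat_def Vmat_def ip_mk2 using detp[OF t] detm[OF t]
      by simp algebra
    moreover have "(p t$1)^2 + (p t$2)^2 > 0"
      using detp[OF t] sum_power2_gt_zero_iff[of "p t$1" "p t$2"] by auto
    moreover have "(m t$1)^2 + (m t$2)^2 \<ge> 0" by simp
    ultimately show ?thesis by (rule pos_helper)
  qed
  have prt: "ip (nderiv 2 \<gamma> t) (nderiv 2 \<gamma> t) = 4" if t: "t \<in> J" for t
    unfolding g2[OF t] G2_def ip_mk2 using detp[OF t] detm[OF t] by simp algebra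
  have ninf: "a = 0 \<and> b = 0" if t: "t \<in> J" and ab: "a *\<^sub>R nderiv 1 \<gamma> t + b *\<^sub>R nderiv 2 \<gamma> t = 0" for t a b
  proof -
    from ab have h: "a*((-2)*(p t$1 * m t$2)) + b*((-2)*(q t$1 * m t$2) + (-2)*(p t$1 * n t$2)) = 0"
       "a*(2*(p t$1 * m t$1)) + b*(2*(q t$1 * m t$1) + 2*(p t$1 * n t$1)) = 0"
       "a*((-2)*(p t$2 * m t$2)) + b*((-2)*(q t$2 * m t$2) + (-2)*(p t$2 * n t$2)) = 0"
       "a*(2*(p t$2 * m t$1)) + b*(2*(q t$2 * m t$1) + 2*(p t$2 * n t$1)) = 0"
      unfolding g1[OF t] g2[OF t] G1_def G2_def scaleR_mk2 add_mk2 zero_mk2 mk2_eq by simp_all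
    show ?thesis using h detp[OF t] detm[OF t] by algebra
  qed
  have tfr: "Tfr \<gamma> t = ca_frame p t ** P2 ** matrix_inv (ca_frame m t)" if t: "t \<in> J" for t
    unfolding Tfr_def g1[OF t] G1_def invm[OF t] cfp cols2_mk2 P2_def mult_mk2 scaleR_mk2 mk2_eq sqrt2_facts(1)
    by (simp add: algebra_simps)
  have nfr: "Nfr \<gamma> t = ca_frame p t ** P3 ** matrix_inv (ca_frame m t)" if t: "t \<in> J" for t
    unfolding Nfr_def g2[OF t] G2_def invm[OF t] cfp cols2_mk2 P3_def mult_mk2 scaleR_mk2 mk2_eq
    by (simp add: algebra_simps)
  have bfr: "Bfr \<gamma> t = ca_frame p t ** P4 ** matrix_inv (ca_frame m t)" if t: "t \<in> J" for t
  proof -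
    have s2: "sqrt 2 * sqrt 2 = (2::real)" by simp
    have kmv: "km t = kp t - 2" using kd[OF t] by simp
    show ?thesis
      unfolding Bfr_def bend[OF t] g1[OF t] g3[OF t] G1_def G3_def invm[OF t] cfp cols2_mk2 P4_def mult_mk2
        scaleR_mk2 diff_mk2 mk2_eq rk[OF t] wk[OF t] kmv
      apply (simp only: sqrt2_facts(2,3))
      by (simp add: field_simps)
  qed
  have gdef: "\<gamma> t = ca_frame p t ** matrix_inv (ca_frame m t)" for t by (simp add: \<gamma>_def)
  show ?thesis
    unfolding Let_def \<gamma>_def[symmetric] kp_def[symmetric] km_def[symmetric]
    unfolding null_curve_def future_directed_def proper_time_def no_inflection_def spinor_frame_def
    using sg ads nul fut prt ninf bend sfp sfm dfp dfm tfr nfr bfr gdef by auto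
qed



lemma bl_column: "bounded_linear (\<lambda>X::mat2. column j X)"
  by (rule linear_conv_bounded_linear[THEN iffD1]) (auto intro!: linearI simp: vec_eq_iff column_def)

lemma forward:
  assumes J: "open J" and nc: "null_curve J \<gamma>" and sf: "spinor_frame J \<gamma> Fp Fm"
  shows "let \<eta>p = (\<lambda>t. column 1 (Fp t)); \<eta>m = (\<lambda>t. column 1 (Fm t)) in
          star_shaped J \<eta>p \<and> star_shaped J \<eta>m \<and> ca_arclength J \<eta>p \<and> ca_arclength J \<eta>m
          \<and> (\<forall>t\<in>J. ca_frame \<eta>p t = Fp t \<and> ca_frame \<eta>m t = Fm t
                 \<and> ca_curvature \<eta>p t = bending \<gamma> t + 1
                 \<and> ca_curvature \<eta>m t = bending \<gamma> t - 1)
          \<and> cousins J \<eta>p \<eta>m"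
proof -
  from sf have sFp: "smooth_on J Fp" and sFm: "smooth_on J Fm"
    and dP: "\<And>t. t\<in>J \<Longrightarrow> det (Fp t) = 1" and dM: "\<And>t. t\<in>J \<Longrightarrow> det (Fm t) = 1"
    and gam: "\<And>t. t\<in>J \<Longrightarrow> \<gamma> t = Fp t ** matrix_inv (Fm t)"
    and Tf: "\<And>t. t\<in>J \<Longrightarrow> Tfr \<gamma> t = Fp t ** P2 ** matrix_inv (Fm t)"
    and Nf: "\<And>t. t\<in>J \<Longrightarrow> Nfr \<gamma> t = Fp t ** P3 ** matrix_inv (Fm t)"
    unfolding spinor_frame_def by auto
  define a where "a s = Fp s$1$1" for s
  define b where "b s = Fp s$1$2" for s
  define c where "c s = Fp s$2$1" for s
  define d where "d s = Fp s$2$2" for s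
  define e where "e s = Fm s$1$1" for s
  define f where "f s = Fm s$1$2" for s
  define g where "g s = Fm s$2$1" for s
  define h where "h s = Fm s$2$2" for s
  define a1 where "a1 s = nderiv 1 Fp s$1$1" for s
  define b1 where "b1 s = nderiv 1 Fp s$1$2" for s
  define c1 where "c1 s = nderiv 1 Fp s$2$1" for s
  define d1 where "d1 s = nderiv 1 Fp s$2$2" for s
  define e1 where "e1 s = nderiv 1 Fm s$1$1" for s
  define f1 where "f1 s = nderiv 1 Fm s$1$2" for s
  define g1 where "g1 s = nderiv 1 Fm s$2$1" for s
  define h1 where "h1 s = nderiv 1 Fm s$2$2" for s
  have Fpe: "Fp s = mk2 (a s) (b s) (c s) (d s)" for s unfolding a_def b_def c_def d_def by (rule mat2_mk2)
  have Fme: "Fm s = mk2 (e s) (f s) (g s) (h s)" for s unfolding e_def f_def g_def h_def by (rule mat2_mk2)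
  have Fpe1: "nderiv 1 Fp s = mk2 (a1 s) (b1 s) (c1 s) (d1 s)" for s unfolding a1_def b1_def c1_def d1_def by (rule mat2_mk2)
  have Fme1: "nderiv 1 Fm s = mk2 (e1 s) (f1 s) (g1 s) (h1 s)" for s unfolding e1_def f1_def g1_def h1_def by (rule mat2_mk2)
  have D: "(a has_real_derivative a1 t) (at t)" "(b has_real_derivative b1 t) (at t)"
    "(c has_real_derivative c1 t) (at t)" "(d has_real_derivative d1 t) (at t)"
    "(e has_real_derivative e1 t) (at t)" "(f has_real_derivative f1 t) (at t)"
    "(g has_real_derivative g1 t) (at t)" "(h has_real_derivative h1 t) (at t)" if t: "t \<in> J" for t
  proof -
    have "a = (\<lambda>s. Fp s$1$1)" "b = (\<lambda>s. Fp s$1$2)" "c = (\<lambda>s. Fp s$2$1)" "d = (\<lambda>s. Fp s$2$2)"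
      "e = (\<lambda>s. Fm s$1$1)" "f = (\<lambda>s. Fm s$1$2)" "g = (\<lambda>s. Fm s$2$1)" "h = (\<lambda>s. Fm s$2$2)"
      by (rule ext, simp only: a_def b_def c_def d_def e_def f_def g_def h_def)+
    then show "(a has_real_derivative a1 t) (at t)" "(b has_real_derivative b1 t) (at t)"
    "(c has_real_derivative c1 t) (at t)" "(d has_real_derivative d1 t) (at t)"
    "(e has_real_derivative e1 t) (at t)" "(f has_real_derivative f1 t) (at t)"
    "(g has_real_derivative g1 t) (at t)" "(h has_real_derivative h1 t) (at t)"
      unfolding a1_def b1_def c1_def d1_def e1_def f1_def g1_def h1_def
      using entry_deriv[OF smooth_der0[OF sFp t]] entry_deriv[OF smooth_der0[OF sFm t]] by simp_all
  qed
  have detP: "a t * d t - b t * c t = 1" if "t \<in> J" for t using dP[OF that] unfolding Fpe det_mk2 .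
  have detM: "e t * h t - f t * g t = 1" if "t \<in> J" for t using dM[OF that] unfolding Fme det_mk2 .
  have ddP: "a1 t * d t + a t * d1 t - b1 t * c t - b t * c1 t = 0" if t: "t \<in> J" for t
  proof -
    have dd: "((\<lambda>s. 1*(a s*d s) + (-1)*(b s*c s)) has_real_derivative 1*(a1 t*d t + a t*d1 t) + (-1)*(b1 t*c t + b t*c1 t)) (at t)"
      by (rule dpoly[OF D(1,4,2,3)[OF t]]) simp
    have cc: "\<forall>s\<in>J. 1*(a s*d s) + (-1)*(b s*c s) = 1" using detP by simp
    have "1*(a1 t*d t + a t*d1 t) + (-1)*(b1 t*c t + b t*c1 t) = 0"
      by (rule const_deriv_zero[OF J t cc dd])
    then show ?thesis by (simp add: algebra_simps)
  qed
  have ddM: "e1 t * h t + e t * h1 t - f1 t * g t - f t * g1 t = 0" if t: "t \<in> J" for t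
  proof -
    have dd: "((\<lambda>s. 1*(e s*h s) + (-1)*(f s*g s)) has_real_derivative 1*(e1 t*h t + e t*h1 t) + (-1)*(f1 t*g t + f t*g1 t)) (at t)"
      by (rule dpoly[OF D(5,8,6,7)[OF t]]) simp
    have cc: "\<forall>s\<in>J. 1*(e s*h s) + (-1)*(f s*g s) = 1" using detM by simp
    have "1*(e1 t*h t + e t*h1 t) + (-1)*(f1 t*g t + f t*g1 t) = 0"
      by (rule const_deriv_zero[OF J t cc dd])
    then show ?thesis by (simp add: algebra_simps)
  qed
  have invM: "matrix_inv (Fm t) = mk2 (h t) (-(f t)) (-(g t)) (e t)" if "t \<in> J" for t
    unfolding Fme by (rule inv_mk2) (use detM[OF that] in simp)
  define H0 where "H0 = (\<lambda>s. mk2 (1*(a s*h s) + (-1)*(b s*g s)) ((-1)*(a s*f s) + 1*(b s*e s))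
       (1*(c s*h s) + (-1)*(d s*g s)) ((-1)*(c s*f s) + 1*(d s*e s)))"
  define H1 where "H1 = (\<lambda>s. mk2 ((-2)*(a s*g s) + 0*(a s*g s)) (2*(a s*e s) + 0*(a s*e s))
       ((-2)*(c s*g s) + 0*(c s*g s)) (2*(c s*e s) + 0*(c s*e s)))"
  define H2 where "H2 = (\<lambda>s. mk2 ((-2)*(a s*h s) + (-2)*(b s*g s)) (2*(a s*f s) + 2*(b s*e s))
       ((-2)*(c s*h s) + (-2)*(d s*g s)) (2*(c s*f s) + 2*(d s*e s)))"
  define R1 where "R1 = (\<lambda>t. mk2 (1*(a1 t*h t + a t*h1 t) + (-1)*(b1 t*g t + b t*g1 t))
       ((-1)*(a1 t*f t + a t*f1 t) + 1*(b1 t*e t + b t*e1 t))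
       (1*(c1 t*h t + c t*h1 t) + (-1)*(d1 t*g t + d t*g1 t))
       ((-1)*(c1 t*f t + c t*f1 t) + 1*(d1 t*e t + d t*e1 t)))"
  define R2 where "R2 = (\<lambda>t. mk2 ((-2)*(a1 t*g t + a t*g1 t) + 0*(a1 t*g t + a t*g1 t))
       (2*(a1 t*e t + a t*e1 t) + 0*(a1 t*e t + a t*e1 t))
       ((-2)*(c1 t*g t + c t*g1 t) + 0*(c1 t*g t + c t*g1 t))
       (2*(c1 t*e t + c t*e1 t) + 0*(c1 t*e t + c t*e1 t)))"
  define R3 where "R3 = (\<lambda>t. mk2 ((-2)*(a1 t*h t + a t*h1 t) + (-2)*(b1 t*g t + b t*g1 t))
       (2*(a1 t*f t + a t*f1 t) + 2*(b1 t*e t + b t*e1 t))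
       ((-2)*(c1 t*h t + c t*h1 t) + (-2)*(d1 t*g t + d t*g1 t))
       (2*(c1 t*f t + c t*f1 t) + 2*(d1 t*e t + d t*e1 t)))"
  have h0: "\<forall>s\<in>J. nderiv 0 \<gamma> s = H0 s"
    using gam invM unfolding H0_def Fpe by (simp add: mult_mk2 mk2_eq algebra_simps)
  have dH0: "(H0 has_vector_derivative R1 t) (at t)" if t: "t \<in> J" for t
    unfolding H0_def R1_def
    apply (rule mk2_deriv)
    apply (rule dpoly[OF D(1,8,2,7)[OF t]], simp)
    apply (rule dpoly[OF D(1,6,2,5)[OF t]], simp)
    apply (rule dpoly[OF D(3,8,4,7)[OF t]], simp)
    by (rule dpoly[OF D(3,6,4,5)[OF t]], simp)
  have n1': "nderiv 1 \<gamma> t = R1 t" if t: "t \<in> J" for t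
    using nderiv_next[OF J h0 t dH0[OF t]] by (simp add: nd_num)
  have s2: "sqrt 2 * sqrt 2 = (2::real)" by simp
  have h1: "\<forall>s\<in>J. nderiv 1 \<gamma> s = H1 s"
  proof
    fix s assume s: "s \<in> J"
    have "nderiv 1 \<gamma> s = sqrt 2 *\<^sub>R Tfr \<gamma> s" unfolding Tfr_def by simp
    also have "\<dots> = H1 s" unfolding Tf[OF s] invM[OF s] Fpe P2_def mult_mk2 scaleR_mk2 H1_def mk2_eq
      by (simp add: algebra_simps s2)
    finally show "nderiv 1 \<gamma> s = H1 s" .
  qed
  have dH1: "(H1 has_vector_derivative R2 t) (at t)" if t: "t \<in> J" for t
    unfolding H1_def R2_def
    apply (rule mk2_deriv)
    apply (rule dpoly[OF D(1,7,1,7)[OF t]], simp)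
    apply (rule dpoly[OF D(1,5,1,5)[OF t]], simp)
    apply (rule dpoly[OF D(3,7,3,7)[OF t]], simp)
    by (rule dpoly[OF D(3,5,3,5)[OF t]], simp)
  have n2': "nderiv 2 \<gamma> t = R2 t" if t: "t \<in> J" for t
    using nderiv_next[OF J h1 t dH1[OF t]] by (simp only: nd_num)
  have h2: "\<forall>s\<in>J. nderiv 2 \<gamma> s = H2 s"
  proof
    fix s assume s: "s \<in> J"
    have "nderiv 2 \<gamma> s = 2 *\<^sub>R Nfr \<gamma> s" unfolding Nfr_def by simp
    also have "\<dots> = H2 s" unfolding Nf[OF s] invM[OF s] Fpe P3_def mult_mk2 scaleR_mk2 H2_def mk2_eq
      by (simp add: algebra_simps)
    finally show "nderiv 2 \<gamma> s = H2 s" .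
  qed
  have dH2: "(H2 has_vector_derivative R3 t) (at t)" if t: "t \<in> J" for t
    unfolding H2_def R3_def
    apply (rule mk2_deriv)
    apply (rule dpoly[OF D(1,8,2,7)[OF t]], simp)
    apply (rule dpoly[OF D(1,6,2,5)[OF t]], simp)
    apply (rule dpoly[OF D(3,8,4,7)[OF t]], simp)
    by (rule dpoly[OF D(3,6,4,5)[OF t]], simp)
  have n3': "nderiv 3 \<gamma> t = R3 t" if t: "t \<in> J" for t
    using nderiv_next[OF J h2 t dH2[OF t]] by (simp only: nd_num)
  have alg: "a1 t = b t \<and> c1 t = d t \<and> e1 t = f t \<and> g1 t = h t
      \<and> -(b t * d1 t - d t * b1 t) = bending \<gamma> t + 1 \<and> -(f t * h1 t - h t * f1 t) = bending \<gamma> t - 1"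
    if t: "t \<in> J" for t
  proof -
    have E1: "R1 t = H1 t" using n1'[OF t] h1 t by simp
    have E2: "R2 t = H2 t" using n2'[OF t] h2 t by simp
    have B: "bending \<gamma> t = -(1/16) * ip (R3 t) (R3 t)" unfolding bending_def n3'[OF t] by simp
    show ?thesis
      using E1[unfolded R1_def H1_def mk2_eq] E2[unfolded R2_def H2_def mk2_eq]
        B[unfolded R3_def ip_mk2] detP[OF t] detM[OF t] ddP[OF t] ddM[OF t]
      apply (elim conjE)
      apply (intro conjI)
      by algebra+
  qed
  define \<eta>p where "\<eta>p = (\<lambda>t. column 1 (Fp t))"
  define \<eta>m where "\<eta>m = (\<lambda>t. column 1 (Fm t))"
  have sp: "smooth_on J \<eta>p" unfolding \<eta>p_def by (rule smooth_lin(1)[OF J bl_column sFp])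
  have sm: "smooth_on J \<eta>m" unfolding \<eta>m_def by (rule smooth_lin(1)[OF J bl_column sFm])
  have p1: "\<forall>s\<in>J. nderiv 1 \<eta>p s = column 2 (Fp s)"
  proof
    fix s assume s: "s \<in> J"
    have "nderiv 1 \<eta>p s = column 1 (nderiv 1 Fp s)" unfolding \<eta>p_def by (rule smooth_lin(2)[OF J bl_column sFp s])
    then show "nderiv 1 \<eta>p s = column 2 (Fp s)" using alg[OF s]
      by (simp add: vec2_eq_iff Fpe Fpe1 del: One_nat_def)
  qed
  have m1: "\<forall>s\<in>J. nderiv 1 \<eta>m s = column 2 (Fm s)"
  proof
    fix s assume s: "s \<in> J"
    have "nderiv 1 \<eta>m s = column 1 (nderiv 1 Fm s)" unfolding \<eta>m_def by (rule smooth_lin(2)[OF J bl_column sFm s])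
    then show "nderiv 1 \<eta>m s = column 2 (Fm s)" using alg[OF s]
      by (simp add: vec2_eq_iff Fme Fme1 del: One_nat_def)
  qed
  have p2: "nderiv 2 \<eta>p t = column 2 (nderiv 1 Fp t)" if t: "t \<in> J" for t
    using nderiv_next[OF J p1 t bounded_linear.has_vector_derivative[OF bl_column smooth_der0[OF sFp t]]]
    by (simp only: nd_num)
  have m2: "nderiv 2 \<eta>m t = column 2 (nderiv 1 Fm t)" if t: "t \<in> J" for t
    using nderiv_next[OF J m1 t bounded_linear.has_vector_derivative[OF bl_column smooth_der0[OF sFm t]]]
    by (simp only: nd_num)
  have frp: "ca_frame \<eta>p t = Fp t" if t: "t \<in> J" for t
    unfolding ca_frame_def p1[rule_format, OF t] unfolding \<eta>p_def by (simp add: mat2_eq_iff cols2_def)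
  have frm: "ca_frame \<eta>m t = Fm t" if t: "t \<in> J" for t
    unfolding ca_frame_def m1[rule_format, OF t] unfolding \<eta>m_def by (simp add: mat2_eq_iff cols2_def)
  have dp: "det (cols2 (\<eta>p t) (nderiv 1 \<eta>p t)) = 1" if t: "t \<in> J" for t
    using frp[OF t] dP[OF t] unfolding ca_frame_def by simp
  have dm: "det (cols2 (\<eta>m t) (nderiv 1 \<eta>m t)) = 1" if t: "t \<in> J" for t
    using frm[OF t] dM[OF t] unfolding ca_frame_def by simp
  have nzp: "\<eta>p t \<noteq> 0" if t: "t \<in> J" for t
    using dp[OF t] by (auto simp: cols2_mk2 det_mk2)
  have nzm: "\<eta>m t \<noteq> 0" if t: "t \<in> J" for t
    using dm[OF t] by (auto simp: cols2_mk2 det_mk2)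
  have kp: "ca_curvature \<eta>p t = bending \<gamma> t + 1" if t: "t \<in> J" for t
    using alg[OF t] unfolding ca_curvature_def p1[rule_format, OF t] p2[OF t]
    by (simp add: cols2_mk2 det_mk2 Fpe Fpe1 algebra_simps del: One_nat_def)
  have km: "ca_curvature \<eta>m t = bending \<gamma> t - 1" if t: "t \<in> J" for t
    using alg[OF t] unfolding ca_curvature_def m1[rule_format, OF t] m2[OF t]
    by (simp add: cols2_mk2 det_mk2 Fme Fme1 algebra_simps del: One_nat_def)
  show ?thesis
    unfolding Let_def \<eta>p_def[symmetric] \<eta>m_def[symmetric] star_shaped_def ca_arclength_def cousins_def
    using sp sm nzp nzm dp dm frp frm kp km by auto
qed

theorem mainTheorem1:
  fixes J :: "real set"
  assumes J: "open_interval J"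
  shows
   "(\<forall>(\<gamma>::real \<Rightarrow> mat2) Fp Fm.
       null_curve J \<gamma> \<and> future_directed J \<gamma> \<and> no_inflection J \<gamma> \<and> proper_time J \<gamma>
       \<and> spinor_frame J \<gamma> Fp Fm \<longrightarrow>
       (let \<eta>p = (\<lambda>t. column 1 (Fp t)); \<eta>m = (\<lambda>t. column 1 (Fm t)) in
          star_shaped J \<eta>p \<and> star_shaped J \<eta>m \<and> ca_arclength J \<eta>p \<and> ca_arclength J \<eta>m
          \<and> (\<forall>t\<in>J. ca_frame \<eta>p t = Fp t \<and> ca_frame \<eta>m t = Fm t
                 \<and> ca_curvature \<eta>p t = bending \<gamma> t + 1
                 \<and> ca_curvature \<eta>m t = bending \<gamma> t - 1)
          \<and> cousins J \<eta>p \<eta>m))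
    \<and>
    (\<forall>(\<eta>p::real \<Rightarrow> vec2) \<eta>m.
       cousins J \<eta>p \<eta>m \<longrightarrow>
       (let \<gamma> = (\<lambda>t. ca_frame \<eta>p t ** matrix_inv (ca_frame \<eta>m t)) in
          null_curve J \<gamma> \<and> future_directed J \<gamma> \<and> proper_time J \<gamma> \<and> no_inflection J \<gamma>
          \<and> (\<forall>t\<in>J. bending \<gamma> t = (ca_curvature \<eta>p t + ca_curvature \<eta>m t) / 2)
          \<and> spinor_frame J \<gamma> (ca_frame \<eta>p) (ca_frame \<eta>m)))"
proof -
  have J': "open J" using J unfolding open_interval_def by simp
  show ?thesis
  proof (intro conjI allI impI)
    fix \<gamma> :: "real \<Rightarrow> mat2" and Fp Fm
    assume "null_curve J \<gamma> \<and> future_directed J \<gamma> \<and> no_inflection J \<gamma> \<and> proper_time J \<gamma>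
       \<and> spinor_frame J \<gamma> Fp Fm"
    then show "let \<eta>p = (\<lambda>t. column 1 (Fp t)); \<eta>m = (\<lambda>t. column 1 (Fm t)) in
          star_shaped J \<eta>p \<and> star_shaped J \<eta>m \<and> ca_arclength J \<eta>p \<and> ca_arclength J \<eta>m
          \<and> (\<forall>t\<in>J. ca_frame \<eta>p t = Fp t \<and> ca_frame \<eta>m t = Fm t
                 \<and> ca_curvature \<eta>p t = bending \<gamma> t + 1
                 \<and> ca_curvature \<eta>m t = bending \<gamma> t - 1)
          \<and> cousins J \<eta>p \<eta>m"
      using forward[OF J'] by blast
  next
    fix \<eta>p \<eta>m :: "real \<Rightarrow> vec2"
    assume "cousins J \<eta>p \<eta>m"
    then show "let \<gamma> = (\<lambda>t. ca_frame \<eta>p t ** matrix_inv (ca_frame \<eta>m t)) in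
          null_curve J \<gamma> \<and> future_directed J \<gamma> \<and> proper_time J \<gamma> \<and> no_inflection J \<gamma>
          \<and> (\<forall>t\<in>J. bending \<gamma> t = (ca_curvature \<eta>p t + ca_curvature \<eta>m t) / 2)
          \<and> spinor_frame J \<gamma> (ca_frame \<eta>p) (ca_frame \<eta>m)"
      by (rule converse[OF J'])
  qed
qed

end
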